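(* For every $w\in A^*$, $$\Big\|\big(d_\ell(\hat p_{n,\ell}(\cdot|w),\bar p_{n,\ell}(\cdot|w))\big)_{\ell=1}^{L}\Big\|_{L,k}\;\le\;\big\|(\mathrm{conf}_\ell(w))_{\ell=1}^{L}\big\|_{L,r}.$$
   Context: Setting: $A$ is a finite alphabet, $A^*$ the set of finite and left-infinite $A$-valued strings; for $w,w'\in A^*$, $w\preceq w'$ means $w$ is a suffix of $w'$. There are $L$ stationary processes $X(\ell)$, $\ell=1,\dots,L$, with $p_\ell(a\mid x)=\Pr(X(\ell)_0=a\mid X(\ell)^{-1}_{-\infty}=x)$, and for each $\ell$ we observe a sample $X_1^n(\ell)$. $N_{k,\ell}(w)$ is the number of occurrences of $w$ in $X_1^k(\ell)$. If $\min_{1\le\ell\le L}N_{n-1,\ell}(w)>0$, the empirical probability is $\hat p_{n,\ell}(a|w)=N_{n,\ell}(wa)/N_{n-1,\ell}(w)$ and the oracle probability is $\bar p_{n,\ell}(a|w)=\frac{1}{N_{n-1,\ell}(w)}\sum_{i=|w|+1}^{n}\mathbf 1\{X^{i-1}_{i-|w|}(\ell)=w\}\,p_\ell(a|X^{i-1}_{-\infty}(\ell))$; otherwise both are set to $1/|A|$. Each $d_\ell:\Delta^A\times\Delta^A\to[0,1]$ is a metric on probability distributions over $A$. For $v\in\mathbb R^L$ and $q\ge1$, $\|v\|_{L,q}=(\frac1L\sum_{\ell=1}^L|v_\ell|^q)^{1/q}$ (and $\|v\|_{L,\infty}=\max_\ell|v_\ell|$). A confidence radius $\mathrm{conf}(w)=(\mathrm{conf}_1(w),\dots,\mathrm{conf}_L(w))$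 with $0\le\mathrm{conf}_\ell(w)\le1$ is given for each $w$, componentwise increasing ($\mathrm{conf}_\ell(w)\le\mathrm{conf}_\ell(w')$ if $w\preceq w'$). The positive (extended) integers $k,r,m$ satisfy $k\le m$ and $r\ge km/(m-k)$, or $k\le r=m=\infty$. Assume the event $$\mathrm{Good}_m=\bigcap_{w\in A^*}\Big\{\Big\|\Big(\tfrac{d_\ell(\bar p_{n,\ell}(\cdot|w),\hat p_{n,\ell}(\cdot|w))}{\mathrm{conf}_\ell(w)}\Big)_{\ell=1}^L\Big\|_{L,m}\le1\ \text{ whenever }\min_{1\le\ell\le L}N_{n-1,\ell}(w)>0\Big\}$$ occurs. *)

theory Defs
  imports Complex_Main "HOL-Library.Extended_Nat"
begin

text \<open>Strings in A^*: finite strings (a list, last element = most recent symbol)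
  and left-infinite strings (f 0 = most recent symbol, f 1 the one before, ...).\<close>
datatype 'a str = Fin "'a list" | Inf "nat \<Rightarrow> 'a"

fun suffix_str :: "'a str \<Rightarrow> 'a str \<Rightarrow> bool" where
  "suffix_str (Fin u) (Fin v) = (\<exists>z. v = z @ u)"
| "suffix_str (Fin u) (Inf f) = (\<forall>j<length u. u ! (length u - 1 - j) = f j)"
| "suffix_str (Inf f) (Fin v) = False"
| "suffix_str (Inf f) (Inf g) = (f = g)"

definition matches_at :: "(int \<Rightarrow> 'a) \<Rightarrow> 'a list \<Rightarrow> int \<Rightarrow> bool" where
  "matches_at X u i = (\<forall>j<length u. X (i - int (length u) + 1 + int j) = u ! j)"

text \<open>N_k(u): number of occurrences of u in X_1^k (end positions i with |u| \<le> i \<le> k).\<close>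
definition cnt :: "(int \<Rightarrow> 'a) \<Rightarrow> nat \<Rightarrow> 'a list \<Rightarrow> nat" where
  "cnt X k u = card {i \<in> {int (length u)..int k}. matches_at X u i}"

fun Cnt :: "(int \<Rightarrow> 'a) \<Rightarrow> nat \<Rightarrow> 'a str \<Rightarrow> nat" where
  "Cnt X k (Fin u) = cnt X k u"
| "Cnt X k (Inf f) = 0"

definition allpos :: "(nat \<Rightarrow> int \<Rightarrow> 'a) \<Rightarrow> nat \<Rightarrow> nat \<Rightarrow> 'a str \<Rightarrow> bool" where
  "allpos X L n w = (\<forall>l\<in>{1..L}. Cnt (X l) (n - 1) w > 0)"

definition phat :: "(nat \<Rightarrow> int \<Rightarrow> 'a::finite) \<Rightarrow> nat \<Rightarrow> nat \<Rightarrow> nat \<Rightarrow> 'a str \<Rightarrow> 'a \<Rightarrow> real" where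
  "phat X L n l w a =
     (if allpos X L n w then
        (case w of Fin u \<Rightarrow> real (cnt (X l) n (u @ [a])) / real (cnt (X l) (n - 1) u)
                 | Inf f \<Rightarrow> 1 / real (card (UNIV :: 'a set)))
      else 1 / real (card (UNIV :: 'a set)))"

text \<open>Oracle probability \<open>p_bar_{n,l}(a|w)\<close>; \<open>p l x a\<close> = p_l(a|x) for a left-infinite past x.\<close>
definition pbar :: "(nat \<Rightarrow> int \<Rightarrow> 'a::finite) \<Rightarrow> (nat \<Rightarrow> (nat \<Rightarrow> 'a) \<Rightarrow> 'a \<Rightarrow> real)
    \<Rightarrow> nat \<Rightarrow> nat \<Rightarrow> nat \<Rightarrow> 'a str \<Rightarrow> 'a \<Rightarrow> real" where
  "pbar X p L n l w a =
     (if allpos X L n w then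
        (case w of Fin u \<Rightarrow>
            ((\<Sum>i\<in>{length u + 1..n}.
               (if matches_at (X l) u (int i - 1)
                then p l (\<lambda>j. X l (int i - 1 - int j)) a else 0))
            / real (cnt (X l) (n - 1) u))
                 | Inf f \<Rightarrow> 1 / real (card (UNIV :: 'a set)))
      else 1 / real (card (UNIV :: 'a set)))"

definition simplex :: "('a::finite \<Rightarrow> real) set" where
  "simplex = {f. (\<forall>a. 0 \<le> f a) \<and> sum f UNIV = 1}"

definition metric_on_simplex :: "(('a::finite \<Rightarrow> real) \<Rightarrow> ('a \<Rightarrow> real) \<Rightarrow> real) \<Rightarrow> bool" where
  "metric_on_simplex d =
    (\<forall>x\<in>simplex. \<forall>y\<in>simplex. 0 \<le> d x y \<and> d x y \<le> 1 \<and> (d x y = 0 \<longleftrightarrow> x = y)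
        \<and> d x y = d y x \<and> (\<forall>z\<in>simplex. d x z \<le> d x y + d y z))"

definition normLq :: "nat \<Rightarrow> enat \<Rightarrow> (nat \<Rightarrow> real) \<Rightarrow> real" where
  "normLq L q v = (case q of
      enat q' \<Rightarrow> ((1 / real L) * (\<Sum>l=1..L. \<bar>v l\<bar> ^ q')) powr (1 / real q')
    | \<infinity> \<Rightarrow> Max ((\<lambda>l. \<bar>v l\<bar>) ` {1..L}))"

text \<open>Ratio d/conf with the conventions 0/0 = 0 and x/0 = \<infinity> for x > 0
  (the latter excluded in Good by requiring d = 0 wherever conf = 0).\<close>
definition Good :: "(nat \<Rightarrow> int \<Rightarrow> 'a::finite) \<Rightarrow> (nat \<Rightarrow> (nat \<Rightarrow> 'a) \<Rightarrow> 'a \<Rightarrow> real)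
    \<Rightarrow> (nat \<Rightarrow> ('a \<Rightarrow> real) \<Rightarrow> ('a \<Rightarrow> real) \<Rightarrow> real) \<Rightarrow> (nat \<Rightarrow> 'a str \<Rightarrow> real)
    \<Rightarrow> nat \<Rightarrow> nat \<Rightarrow> enat \<Rightarrow> bool" where
  "Good X p d conf L n m =
    (\<forall>w. allpos X L n w \<longrightarrow>
       ((\<forall>l\<in>{1..L}. conf l w = 0 \<longrightarrow> d l (pbar X p L n l w) (phat X L n l w) = 0) \<and>
        normLq L m (\<lambda>l. d l (pbar X p L n l w) (phat X L n l w) / conf l w) \<le> 1))"

definition exps_ok :: "enat \<Rightarrow> enat \<Rightarrow> enat \<Rightarrow> bool" where
  "exps_ok k r m =
    ((\<exists>k' m'. k = enat k' \<and> m = enat m' \<and> 1 \<le> k' \<and> k' \<le> m' \<and>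
        (if k' = m' then r = \<infinity>
         else (r = \<infinity> \<or> (\<exists>r'. r = enat r' \<and> real (k' * m') / real (m' - k') \<le> real r'))))
     \<or> (1 \<le> k \<and> k \<le> r \<and> r = \<infinity> \<and> m = \<infinity>))"

end

theory Submission imports Defs "HOL-Analysis.Convex" begin
definition PM :: "nat \<Rightarrow> real \<Rightarrow> (nat \<Rightarrow> real) \<Rightarrow> real" where
  "PM L a f = ((1 / real L) * (\<Sum>l=1..L. \<bar>f l\<bar> powr a)) powr (1 / a)"

definition Mx :: "nat \<Rightarrow> (nat \<Rightarrow> real) \<Rightarrow> real" where
  "Mx L f = Max ((\<lambda>l. \<bar>f l\<bar>) ` {1..L})"

lemma PM_nonneg: "0 \<le> PM L a f" by (simp add: PM_def)

lemma holder_base: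
  fixes F G :: "nat \<Rightarrow> real" and p q :: real
  assumes L: "1 \<le> L" and pq: "p > 1" "q > 1" "1/p + 1/q = 1"
    and F: "\<And>l. 0 \<le> F l" and G: "\<And>l. 0 \<le> G l"
  shows "(1/real L) * (\<Sum>l=1..L. F l * G l) \<le>
     ((1/real L) * (\<Sum>l=1..L. F l powr p)) powr (1/p) * ((1/real L) * (\<Sum>l=1..L. G l powr q)) powr (1/q)"
proof -
  define SF where "SF = (1/real L) * (\<Sum>l=1..L. F l powr p)"
  define SG where "SG = (1/real L) * (\<Sum>l=1..L. G l powr q)"
  define A where "A = SF powr (1/p)"
  define B where "B = SG powr (1/q)"
  have SF0: "0 \<le> SF" unfolding SF_def by (intro mult_nonneg_nonneg sum_nonneg) auto
  have SG0: "0 \<le> SG" unfolding SG_def by (intro mult_nonneg_nonneg sum_nonneg) auto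
  have Lpos: "real L > 0" using L by simp
  show ?thesis
  proof (cases "A = 0 \<or> B = 0")
    case True
    then show ?thesis
    proof
      assume "A = 0"
      then have "SF = 0" unfolding A_def by simp
      then have "(\<Sum>l=1..L. F l powr p) = 0" using Lpos unfolding SF_def by simp
      then have "\<forall>l\<in>{1..L}. F l powr p = 0" by (subst (asm) sum_nonneg_eq_0_iff) auto
      then have "\<forall>l\<in>{1..L}. F l = 0" by simp
      then have "(\<Sum>l=1..L. F l * G l) = 0" by simp
      then show ?thesis by (simp add: A_def B_def)
    next
      assume "B = 0"
      then have "SG = 0" unfolding B_def by simp
      then have "(\<Sum>l=1..L. G l powr q) = 0" using Lpos unfolding SG_def by simp
      then have "\<forall>l\<in>{1..L}. G l powr q = 0" by (subst (asm) sum_nonneg_eq_0_iff) auto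
      then have "\<forall>l\<in>{1..L}. G l = 0" by simp
      then have "(\<Sum>l=1..L. F l * G l) = 0" by simp
      then show ?thesis by (simp add: A_def B_def)
    qed
  next
    case False
    then have A0: "A > 0" and B0: "B > 0" unfolding A_def B_def by auto
    have Ap: "A powr p = SF" unfolding A_def using pq SF0 by (simp add: powr_powr)
    have Bq: "B powr q = SG" unfolding B_def using pq SG0 by (simp add: powr_powr)
    have SFp: "SF > 0" using A0 SF0 unfolding A_def by (auto simp: order.order_iff_strict)
    have SGp: "SG > 0" using B0 SG0 unfolding B_def by (auto simp: order.order_iff_strict)
    have y: "F l / A * (G l / B) \<le> F l powr p / (SF * p) + G l powr q / (SG * q)" for l
    proof -
      have "F l / A * (G l / B) \<le> (F l / A) powr p / p + (G l / B) powr q / q"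
        using Youngs_inequality[OF pq, of "F l / A" "G l / B"] F G A0 B0 by auto
      also have "\<dots> = F l powr p / (SF * p) + G l powr q / (SG * q)"
        using F G A0 B0 by (simp add: powr_divide Ap Bq)
      finally show ?thesis .
    qed
    have "(\<Sum>l=1..L. F l / A * (G l / B)) \<le> (\<Sum>l=1..L. F l powr p / (SF * p) + G l powr q / (SG * q))"
      by (rule sum_mono) (rule y)
    also have "\<dots> = (\<Sum>l=1..L. F l powr p) / (SF * p) + (\<Sum>l=1..L. G l powr q) / (SG * q)"
      by (simp add: sum.distrib sum_divide_distrib)
    also have "\<dots> = real L * (1/p + 1/q)"
    proof -
      have a: "(\<Sum>l=1..L. F l powr p) = real L * SF" unfolding SF_def using Lpos by simp
      have b: "(\<Sum>l=1..L. G l powr q) = real L * SG" unfolding SG_def using Lpos by simp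
      show ?thesis unfolding a b using SFp SGp pq by (simp add: field_simps)
    qed
    also have "\<dots> = real L" using pq by simp
    finally have "(\<Sum>l=1..L. F l * G l) / (A * B) \<le> real L"
      by (simp add: sum_divide_distrib)
    then have "(\<Sum>l=1..L. F l * G l) \<le> real L * (A * B)"
      using A0 B0 by (simp add: divide_le_eq)
    then show ?thesis using Lpos unfolding A_def B_def SF_def SG_def
      by (simp add: field_simps)
  qed
qed

lemma holder_PM:
  assumes L: "1 \<le> L" and a: "a > 0" "p > 0" "q > 0" and e: "1/a = 1/p + 1/q"
  shows "PM L a (\<lambda>l. f l * g l) \<le> PM L p f * PM L q g"
proof -
  define F where "F l = \<bar>f l\<bar> powr a" for l
  define G where "G l = \<bar>g l\<bar> powr a" for l
  have pq: "p/a > 1" "q/a > 1" "1/(p/a) + 1/(q/a) = 1"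
  proof -
    have "a/p + a/q = a * (1/p + 1/q)" by (simp add: field_simps)
    also have "\<dots> = 1" using a by (simp flip: e)
    finally have "a/p + a/q = 1" .
    moreover have "a/p > 0" "a/q > 0" using a by auto
    ultimately have "a/p < 1" "a/q < 1" by linarith+
    then show "p/a > 1" "q/a > 1" using a by (simp_all add: field_simps)
    show "1/(p/a) + 1/(q/a) = 1" using \<open>a/p + a/q = 1\<close> by simp
  qed
  have Fp: "F l powr (p/a) = \<bar>f l\<bar> powr p" for l unfolding F_def using a by (simp add: powr_powr)
  have Gq: "G l powr (q/a) = \<bar>g l\<bar> powr q" for l unfolding G_def using a by (simp add: powr_powr)
  have FG: "F l * G l = \<bar>f l * g l\<bar> powr a" for l unfolding F_def G_def by (simp add: abs_mult powr_mult)
  have Fn: "0 \<le> F l" for l by (simp add: F_def)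
  have Gn: "0 \<le> G l" for l by (simp add: G_def)
  have h: "(1/real L) * (\<Sum>l=1..L. \<bar>f l * g l\<bar> powr a) \<le>
     ((1/real L) * (\<Sum>l=1..L. \<bar>f l\<bar> powr p)) powr (a/p) * ((1/real L) * (\<Sum>l=1..L. \<bar>g l\<bar> powr q)) powr (a/q)"
  proof -
    have hb: "(1/real L) * (\<Sum>l=1..L. F l * G l) \<le>
     ((1/real L) * (\<Sum>l=1..L. F l powr (p/a))) powr (1/(p/a)) * ((1/real L) * (\<Sum>l=1..L. G l powr (q/a))) powr (1/(q/a))"
      by (rule holder_base[OF L pq]) (rule Fn, rule Gn)
    then show ?thesis unfolding Fp Gq FG by simp
  qed
  define X where "X = (1/real L) * (\<Sum>l=1..L. \<bar>f l\<bar> powr p)"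
  define Y where "Y = (1/real L) * (\<Sum>l=1..L. \<bar>g l\<bar> powr q)"
  have X0: "X \<ge> 0" "Y \<ge> 0" unfolding X_def Y_def by (intro mult_nonneg_nonneg sum_nonneg; simp)+
  have "PM L a (\<lambda>l. f l * g l) \<le> (X powr (a/p) * Y powr (a/q)) powr (1/a)"
    unfolding PM_def X_def Y_def using a h by (intro powr_mono2) (auto intro!: divide_nonneg_nonneg sum_nonneg)
  also have "\<dots> = X powr (1/p) * Y powr (1/q)"
    using a X0 by (simp add: powr_mult powr_powr)
  finally show ?thesis unfolding PM_def X_def Y_def .
qed

lemma PM_const1: "1 \<le> L \<Longrightarrow> PM L c (\<lambda>_. 1) = 1"
  by (simp add: PM_def)

lemma power_mean:
  assumes L: "1 \<le> L" and a: "0 < a" "a \<le> b"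
  shows "PM L a f \<le> PM L b f"
proof (cases "a = b")
  case False
  then have ab: "a < b" using a by simp
  define c where "c = a*b/(b-a)"
  have c: "c > 0" using a ab unfolding c_def by simp
  have e: "1/a = 1/b + 1/c" using a ab unfolding c_def by (simp add: field_simps)
  have "PM L a (\<lambda>l. f l * 1) \<le> PM L b f * PM L c (\<lambda>_. 1)"
    using holder_PM[OF L a(1) _ c e, of f "\<lambda>_. 1"] a ab by simp
  then show ?thesis using PM_const1[OF L] by simp
qed simp

lemma PM_mono:
  assumes a: "a > 0" and le: "\<And>l. l \<in> {1..L} \<Longrightarrow> \<bar>f l\<bar> \<le> \<bar>g l\<bar>"
  shows "PM L a f \<le> PM L a g"
proof -
  have "0 \<le> (\<Sum>l=1..L. \<bar>f l\<bar> powr a)" by (intro sum_nonneg) auto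
  then show ?thesis
  unfolding PM_def using a le
  by (intro powr_mono2 mult_left_mono sum_mono) auto
qed

lemma PM_hom:
  assumes a: "a > 0"
  shows "PM L a (\<lambda>l. C * f l) = \<bar>C\<bar> * PM L a f"
proof -
  have "(\<Sum>l=1..L. \<bar>C * f l\<bar> powr a) = \<bar>C\<bar> powr a * (\<Sum>l=1..L. \<bar>f l\<bar> powr a)"
    by (simp add: abs_mult powr_mult sum_distrib_left)
  moreover have "0 \<le> (\<Sum>l=1..L. \<bar>f l\<bar> powr a)" by (intro sum_nonneg) auto
  moreover have "a * (1/a) = 1" using a by simp
  ultimately show ?thesis unfolding PM_def using a
    by (simp add: powr_mult powr_powr mult.assoc times_divide_eq_right[symmetric] del: times_divide_eq_right)
qed

lemma Mx_ge: "l \<in> {1..L} \<Longrightarrow> \<bar>f l\<bar> \<le> Mx L f"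
  unfolding Mx_def by (rule Max_ge) auto

lemma Mx_le: "1 \<le> L \<Longrightarrow> (\<And>l. l \<in> {1..L} \<Longrightarrow> \<bar>f l\<bar> \<le> C) \<Longrightarrow> Mx L f \<le> C"
  unfolding Mx_def by (subst Max_le_iff) auto

lemma Mx_nonneg: "1 \<le> L \<Longrightarrow> 0 \<le> Mx L f"
  using Mx_ge[of 1 L f] by auto

lemma PM_le_Mx:
  assumes L: "1 \<le> L" and a: "a > 0"
  shows "PM L a f \<le> Mx L f"
proof -
  have "PM L a f \<le> PM L a (\<lambda>l. Mx L f * 1)"
    using Mx_ge[of _ L f] Mx_nonneg[OF L, of f] by (intro PM_mono[OF a]) auto
  also have "\<dots> = Mx L f"
    using PM_hom[OF a, of L "Mx L f" "\<lambda>_. 1"] PM_const1[OF L] Mx_nonneg[OF L, of f] by simp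
  finally show ?thesis .
qed

lemma matches_snoc: "matches_at X (u@[a]) i \<longleftrightarrow> matches_at X u (i-1) \<and> X i = a"
proof -
  have e: "i - int (length (u@[a])) + 1 + int j = i - 1 - int (length u) + 1 + int j" for j by simp
  have e2: "i - int (length (u@[a])) + 1 + int (length u) = i" by simp
  show ?thesis
  proof
    assume H: "matches_at X (u@[a]) i"
    have H': "X (i - int (length (u@[a])) + 1 + int j) = (u@[a]) ! j" if "j < length (u@[a])" for j
      using H that unfolding matches_at_def by blast
    have "X (i - 1 - int (length u) + 1 + int j) = u ! j" if "j < length u" for j
      using H'[of j] that unfolding e by (simp add: nth_append)
    then have "matches_at X u (i-1)" unfolding matches_at_def by blast
    moreover have "X i = a" using H'[of "length u"] unfolding e2 by simp
    ultimately show "matches_at X u (i-1) \<and> X i = a" ..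
  next
    assume H: "matches_at X u (i-1) \<and> X i = a"
    have "X (i - int (length (u@[a])) + 1 + int j) = (u@[a]) ! j" if j: "j < length (u@[a])" for j
    proof (cases "j < length u")
      case True
      then show ?thesis using H unfolding e matches_at_def by (simp add: nth_append)
    next
      case False
      then have "j = length u" using j by simp
      then show ?thesis using H e2 by simp
    qed
    then show "matches_at X (u@[a]) i" unfolding matches_at_def by blast
  qed
qed

lemma cnt_pred: "1 \<le> n \<Longrightarrow> cnt X (n-1) u = card {j \<in> {int (length u)..int n - 1}. matches_at X u j}"
  unfolding cnt_def by (simp add: of_nat_diff)

lemma cnt_snoc_sum:
  assumes n: "1 \<le> n"
  shows "(\<Sum>a\<in>(UNIV::'a::finite set). real (cnt X n (u@[a]))) = real (cnt X (n-1) u)"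
proof -
  define S where "S = {i \<in> {int (length u) + 1..int n}. matches_at X u (i-1)}"
  have fS: "finite S" unfolding S_def by (rule finite_subset[of _ "{int (length u)+1..int n}"]) auto
  have c: "cnt X n (u@[a]) = card {i \<in> S. X i = a}" for a
    unfolding cnt_def S_def by (auto simp: matches_snoc intro!: arg_cong[where f=card])
  have "(\<Sum>i\<in>S. (\<lambda>_. 1::real) (X i)) = (\<Sum>a\<in>UNIV. real (card {i \<in> S. X i = a}) * 1)"
    by (rule sum_fun_comp) (use fS in auto)
  then have "(\<Sum>a\<in>(UNIV::'a set). real (cnt X n (u@[a]))) = real (card S)"
    by (simp add: c)
  also have "card S = cnt X (n-1) u"
  proof -
    have "S = (\<lambda>j. j + 1) ` {j \<in> {int (length u)..int n - 1}. matches_at X u j}"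
      unfolding S_def apply (auto simp: image_iff)
      apply (rule_tac x="x - 1" in exI) by simp
    then have "card S = card {j \<in> {int (length u)..int n - 1}. matches_at X u j}"
      by (simp add: card_image)
    then show ?thesis by (simp only: cnt_pred[OF n])
  qed
  finally show ?thesis .
qed

lemma card_nat_int:
  assumes n: "1 \<le> n"
  shows "card {i \<in> {length u + 1..n}. matches_at X u (int i - 1)} = cnt X (n-1) u"
proof -
  have eq: "(\<lambda>i. int i - 1) ` {i \<in> {length u + 1..n}. matches_at X u (int i - 1)}
        = {j \<in> {int (length u)..int n - 1}. matches_at X u j}"
  proof (intro equalityI subsetI)
    fix x assume xin: "x \<in> {j \<in> {int (length u)..int n - 1}. matches_at X u j}"
    show "x \<in> (\<lambda>i. int i - 1) ` {i \<in> {length u + 1..n}. matches_at X u (int i - 1)}"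
    proof (rule image_eqI[of x "\<lambda>i. int i - 1" "nat (x+1)"])
      show "x = int (nat (x + 1)) - 1" using xin by simp
      have x0: "x \<ge> 0" "int (length u) \<le> x" "x \<le> int n - 1" "matches_at X u x" using xin by auto
      then have "int (nat (x+1)) = x + 1" by simp
      moreover have "length u + 1 \<le> nat (x+1)" "nat (x+1) \<le> n" using x0 by linarith+
      ultimately show "nat (x + 1) \<in> {i \<in> {length u + 1..n}. matches_at X u (int i - 1)}"
        using x0 by simp
    qed
  next
    fix x assume "x \<in> (\<lambda>i. int i - 1) ` {i \<in> {length u + 1..n}. matches_at X u (int i - 1)}"
    then obtain i where "i \<in> {length u + 1..n}" "matches_at X u (int i - 1)" "x = int i - 1" by blast
    then show "x \<in> {j \<in> {int (length u)..int n - 1}. matches_at X u j}" by auto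
  qed
  have inj: "inj_on (\<lambda>i. int i - 1) {i \<in> {length u + 1..n}. matches_at X u (int i - 1)}"
    by (auto simp: inj_on_def)
  have "card {i \<in> {length u + 1..n}. matches_at X u (int i - 1)} = card {j \<in> {int (length u)..int n - 1}. matches_at X u j}"
    unfolding eq[symmetric] by (rule card_image[OF inj, symmetric])
  then show ?thesis by (simp only: cnt_pred[OF n])
qed


lemma abs_pow_powr: "1 \<le> q \<Longrightarrow> \<bar>y::real\<bar> ^ q = \<bar>y\<bar> powr real q"
  by (cases "y = 0") (auto simp: powr_realpow)

lemma normLq_enat: "1 \<le> q \<Longrightarrow> normLq L (enat q) f = PM L (real q) f"
  unfolding normLq_def PM_def by (simp add: abs_pow_powr)

lemma normLq_inf: "normLq L \<infinity> f = Mx L f"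
  unfolding normLq_def Mx_def by simp

lemma PM_cong: "a > 0 \<Longrightarrow> (\<And>l. l \<in> {1..L} \<Longrightarrow> \<bar>f l\<bar> = \<bar>g l\<bar>) \<Longrightarrow> PM L a f = PM L a g"
  by (rule antisym; rule PM_mono) auto

lemma Mx_cong: "(\<And>l. l \<in> {1..L} \<Longrightarrow> \<bar>f l\<bar> = \<bar>g l\<bar>) \<Longrightarrow> Mx L f = Mx L g"
proof -
  assume h: "\<And>l. l \<in> {1..L} \<Longrightarrow> \<bar>f l\<bar> = \<bar>g l\<bar>"
  have "(\<lambda>l. \<bar>f l\<bar>) ` {1..L} = (\<lambda>l. \<bar>g l\<bar>) ` {1..L}" by (rule image_cong) (auto simp: h)
  then show ?thesis unfolding Mx_def by simp
qed

lemma uniform_simplex: "(\<lambda>_::'a. 1 / real (card (UNIV::'a::finite set))) \<in> simplex"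
  unfolding simplex_def by simp

lemma allpos_Fin:
  assumes "allpos X L n w" "1 \<le> L"
  obtains u where "w = Fin u" "\<And>l. l \<in> {1..L} \<Longrightarrow> cnt (X l) (n - 1) u > 0"
proof (cases w)
  case (Fin u) then show ?thesis using assms that unfolding allpos_def by auto
next
  case (Inf f) then show ?thesis using assms unfolding allpos_def by auto
qed

lemma phat_simplex:
  assumes ap: "allpos X L n w" and L: "1 \<le> L" and n: "1 \<le> n" and l: "l \<in> {1..L}"
  shows "phat X L n l w \<in> simplex"
proof -
  obtain u where w: "w = Fin u" and c: "cnt (X l) (n - 1) u > 0" using allpos_Fin[OF ap L] l by metis
  have ph: "phat X L n l w = (\<lambda>a. real (cnt (X l) n (u @ [a])) / real (cnt (X l) (n - 1) u))"
    using ap w by (simp add: phat_def fun_eq_iff)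
  have "(\<Sum>a\<in>UNIV. real (cnt (X l) n (u @ [a])) / real (cnt (X l) (n - 1) u)) = 1"
    using cnt_snoc_sum[OF n, of "X l" u] c by (simp add: sum_divide_distrib[symmetric])
  then show ?thesis unfolding ph simplex_def by simp
qed

lemma pbar_simplex:
  assumes ap: "allpos X L n w" and L: "1 \<le> L" and n: "1 \<le> n" and l: "l \<in> {1..L}"
    and pp: "\<And>x. p l x \<in> simplex"
  shows "pbar X p L n l w \<in> simplex"
proof -
  obtain u where w: "w = Fin u" and c: "cnt (X l) (n - 1) u > 0" using allpos_Fin[OF ap L] l by metis
  define M where "M i = matches_at (X l) u (int i - 1)" for i
  define q where "q i = p l (\<lambda>j. X l (int i - 1 - int j))" for i
  have pb: "pbar X p L n l w = (\<lambda>a. (\<Sum>i\<in>{length u + 1..n}. (if M i then q i a else 0)) / real (cnt (X l) (n - 1) u))"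
    unfolding M_def q_def using ap w by (simp add: pbar_def fun_eq_iff)
  have q0: "0 \<le> q i a" for i a using pp unfolding q_def simplex_def by auto
  have q1: "(\<Sum>a\<in>UNIV. q i a) = 1" for i using pp unfolding q_def simplex_def by auto
  have "(\<Sum>a\<in>UNIV. (\<Sum>i\<in>{length u + 1..n}. (if M i then q i a else 0)))
      = (\<Sum>i\<in>{length u + 1..n}. (\<Sum>a\<in>UNIV. (if M i then q i a else 0)))"
    by (rule sum.swap)
  also have "\<dots> = (\<Sum>i\<in>{length u + 1..n}. (if M i then 1 else 0))"
    by (rule sum.cong) (auto simp: q1)
  also have "\<dots> = real (card {i \<in> {length u + 1..n}. M i})"
    by (simp add: sum.inter_filter[symmetric])
  also have "\<dots> = real (cnt (X l) (n - 1) u)"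
    using card_nat_int[OF n, of u "X l"] unfolding M_def by simp
  finally have s: "(\<Sum>a\<in>UNIV. (\<Sum>i\<in>{length u + 1..n}. (if M i then q i a else 0))) = real (cnt (X l) (n - 1) u)" .
  have "(\<Sum>a\<in>UNIV. (\<Sum>i\<in>{length u + 1..n}. (if M i then q i a else 0)) / real (cnt (X l) (n - 1) u)) = 1"
    using s c by (simp add: sum_divide_distrib[symmetric])
  moreover have "0 \<le> (\<Sum>i\<in>{length u + 1..n}. (if M i then q i a else 0)) / real (cnt (X l) (n - 1) u)" for a
    using q0 by (intro divide_nonneg_nonneg sum_nonneg) auto
  ultimately show ?thesis unfolding pb simplex_def by simp
qed

lemma fin_case:
  fixes k' m' r' :: nat
  assumes L: "1 \<le> L" and k1: "1 \<le> k'" and lt: "k' < m'"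
    and kmr: "real (k' * m') / real (m' - k') \<le> real r'"
    and xfin: "PM L (real m') x \<le> 1"
  shows "PM L (real k') (\<lambda>l. x l * c l) \<le> PM L (real r') c"
proof -
  define s where "s = real (k' * m') / real (m' - k')"
  have kpos: "real k' > 0" using k1 by simp
  have spos: "s > 0" unfolding s_def using lt k1 by simp
  have mpos: "real m' > 0" using lt by simp
  have e: "1 / real k' = 1 / real m' + 1 / s"
    unfolding s_def using lt k1 by (simp add: field_simps of_nat_diff)
  have sr: "s \<le> real r'" using kmr unfolding s_def .
  have "PM L (real k') (\<lambda>l. x l * c l) \<le> PM L (real m') x * PM L s c"
    by (rule holder_PM[OF L kpos mpos spos e])
  also have "\<dots> \<le> 1 * PM L s c"
    by (rule mult_right_mono[OF xfin PM_nonneg])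
  also have "\<dots> = PM L s c" by simp
  also have "\<dots> \<le> PM L (real r') c" by (rule power_mean[OF L spos sr])
  finally show ?thesis .
qed

theorem theorem3p1:
  fixes X :: "nat \<Rightarrow> int \<Rightarrow> 'a::finite"
    and p :: "nat \<Rightarrow> (nat \<Rightarrow> 'a) \<Rightarrow> 'a \<Rightarrow> real"
    and d :: "nat \<Rightarrow> ('a \<Rightarrow> real) \<Rightarrow> ('a \<Rightarrow> real) \<Rightarrow> real"
    and conf :: "nat \<Rightarrow> 'a str \<Rightarrow> real"
    and L n :: nat and k r m :: enat
  assumes L: "1 \<le> L" and n: "1 \<le> n"
    and p_prob: "\<And>l x. l \<in> {1..L} \<Longrightarrow> p l x \<in> simplex"
    and d_metric: "\<And>l. l \<in> {1..L} \<Longrightarrow> metric_on_simplex (d l)"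
    and conf_range: "\<And>l w. l \<in> {1..L} \<Longrightarrow> 0 \<le> conf l w \<and> conf l w \<le> 1"
    and conf_mono: "\<And>l w w'. l \<in> {1..L} \<Longrightarrow> suffix_str w w' \<Longrightarrow> conf l w \<le> conf l w'"
    and exps: "exps_ok k r m"
    and good: "Good X p d conf L n m"
  shows "normLq L k (\<lambda>l. d l (phat X L n l w) (pbar X p L n l w)) \<le> normLq L r (\<lambda>l. conf l w)"
proof -
  define v where "v l = d l (phat X L n l w) (pbar X p L n l w)" for l
  define g where "g l = d l (pbar X p L n l w) (phat X L n l w) / conf l w" for l
  define x where "x l = (if allpos X L n w then g l else 0)" for l
  define c where "c l = conf l w" for l
  have c0: "0 \<le> c l" if "l \<in> {1..L}" for l using conf_range[OF that] unfolding c_def by simp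
  have vx: "\<bar>v l\<bar> = \<bar>x l * c l\<bar>" if l: "l \<in> {1..L}" for l
  proof (cases "allpos X L n w")
    case True
    note ap = True
    have s1: "phat X L n l w \<in> simplex" by (rule phat_simplex[OF True L n l])
    have s2: "pbar X p L n l w \<in> simplex" by (rule pbar_simplex[OF True L n l]) (rule p_prob[OF l])
    have ms: "\<forall>x\<in>simplex. \<forall>y\<in>simplex. d l x y = d l y x"
      using d_metric[OF l] unfolding metric_on_simplex_def by blast
    have sym: "v l = d l (pbar X p L n l w) (phat X L n l w)"
      unfolding v_def using ms s1 s2 by blast
    show ?thesis
    proof (cases "c l = 0")
      case True
      have "\<forall>l\<in>{1..L}. conf l w = 0 \<longrightarrow> d l (pbar X p L n l w) (phat X L n l w) = 0"
        using good[unfolded Good_def, rule_format, OF ap] by (rule conjunct1)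
      then have "d l (pbar X p L n l w) (phat X L n l w) = 0" using l True unfolding c_def by blast
      then show ?thesis using sym True by simp
    next
      case False
      have "x l * c l = d l (pbar X p L n l w) (phat X L n l w)"
        using False ap unfolding x_def g_def c_def by simp
      then show ?thesis using sym by simp
    qed
  next
    case False
    have "phat X L n l w = (\<lambda>_. 1 / real (card (UNIV::'a set)))" "pbar X p L n l w = (\<lambda>_. 1 / real (card (UNIV::'a set)))"
      using False by (simp_all add: phat_def pbar_def fun_eq_iff)
    moreover have "d l (\<lambda>_::'a. 1 / real (card (UNIV::'a set))) (\<lambda>_::'a. 1 / real (card (UNIV::'a set))) = 0"
      using d_metric[OF l] uniform_simplex[where 'a='a] unfolding metric_on_simplex_def by blast
    ultimately have "v l = 0" unfolding v_def by simp
    then show ?thesis using False unfolding x_def by simp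
  qed
  have xfin: "PM L (real m') x \<le> 1" if "m = enat m'" "1 \<le> m'" for m'
  proof (cases "allpos X L n w")
    case True
    have "normLq L m g \<le> 1" unfolding g_def using good[unfolded Good_def, rule_format, OF True] by (rule conjunct2)
    then show ?thesis using True that normLq_enat[of m' L g] unfolding x_def by simp
  next
    case False
    then show ?thesis unfolding x_def PM_def using that by simp
  qed
  have xinf: "Mx L x \<le> 1" if "m = \<infinity>"
  proof (cases "allpos X L n w")
    case True
    have "normLq L m g \<le> 1" unfolding g_def using good[unfolded Good_def, rule_format, OF True] by (rule conjunct2)
    then show ?thesis using True that normLq_inf[of L g] unfolding x_def by simp
  next
    case False
    then show ?thesis unfolding x_def by (intro Mx_le[OF L]) auto
  qed
  have Mc0: "0 \<le> Mx L c" by (rule Mx_nonneg[OF L])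
  have cMx: "\<bar>x l * c l\<bar> \<le> \<bar>Mx L c * x l\<bar>" if "l \<in> {1..L}" for l
    using Mx_ge[OF that, of c] c0[OF that] Mc0
    by (simp add: abs_mult) (metis abs_ge_zero mult.commute mult_right_mono)
  have LHS_PM: "normLq L (enat k') v = PM L (real k') (\<lambda>l. x l * c l)" if "1 \<le> k'" for k'
    using that normLq_enat[OF that] PM_cong[of "real k'" L v "\<lambda>l. x l * c l"] vx by simp
  have RHS: "normLq L r (\<lambda>l. conf l w) = normLq L r c" unfolding c_def by simp
  from exps show ?thesis unfolding exps_ok_def v_def[symmetric] RHS
  proof (elim disjE exE conjE)
    fix k' m' assume k: "k = enat k'" and m: "m = enat m'" and k1: "1 \<le> k'" and km: "k' \<le> m'"
      and rr: "if k' = m' then r = \<infinity> else r = \<infinity> \<or> (\<exists>r'. r = enat r' \<and> real (k' * m') / real (m' - k') \<le> real r')"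
    have kpos: "real k' > 0" using k1 by simp
    have "PM L (real k') (\<lambda>l. x l * c l) \<le> PM L (real k') (\<lambda>l. Mx L c * x l)"
      using cMx by (intro PM_mono[OF kpos]) auto
    also have "\<dots> = Mx L c * PM L (real k') x" using PM_hom[OF kpos] Mc0 by simp
    also have "\<dots> \<le> Mx L c * 1"
    proof (rule mult_left_mono[OF _ Mc0])
      have "PM L (real k') x \<le> PM L (real m') x" using power_mean[OF L kpos] km by simp
      also have "\<dots> \<le> 1" using xfin[OF m] k1 km by simp
      finally show "PM L (real k') x \<le> 1" .
    qed
    finally have infcase: "PM L (real k') (\<lambda>l. x l * c l) \<le> Mx L c" by simp
    have LHSk: "normLq L k v = PM L (real k') (\<lambda>l. x l * c l)"
      unfolding k by (rule LHS_PM[OF k1])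
    have m1: "1 \<le> m'" using k1 km by simp
    show "normLq L k v \<le> normLq L r c"
    proof (cases "r = \<infinity>")
      case True
      show ?thesis unfolding LHSk True normLq_inf by (rule infcase)
    next
      case False
      have ne: "k' \<noteq> m'" using rr False by (cases "k' = m'") simp_all
      then have "\<exists>r'. r = enat r' \<and> real (k' * m') / real (m' - k') \<le> real r'" using rr False by simp
      then obtain r' where r: "r = enat r'" and kmr: "real (k' * m') / real (m' - k') \<le> real r'" by blast
      have lt: "k' < m'" using km ne by simp
      have "real (k' * m') / real (m' - k') > 0" using lt k1 by simp
      then have r1: "1 \<le> r'" using kmr by (cases r') auto
      show ?thesis unfolding LHSk r normLq_enat[OF r1]
        by (rule fin_case[OF L k1 lt kmr xfin[OF m m1]])
    qed
  next
    assume k1: "1 \<le> k" and r: "r = \<infinity>" and m: "m = \<infinity>"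
    have xc: "\<bar>x l * c l\<bar> \<le> Mx L c" if "l \<in> {1..L}" for l
    proof -
      have "\<bar>x l\<bar> \<le> 1" using Mx_ge[OF that, of x] xinf[OF m] by simp
      then have "\<bar>x l\<bar> * \<bar>c l\<bar> \<le> 1 * \<bar>c l\<bar>" by (intro mult_right_mono) auto
      then show ?thesis using Mx_ge[OF that, of c] by (simp add: abs_mult)
    qed
    show "normLq L k v \<le> normLq L r c"
    proof (cases k)
      case (enat k')
      then have k1': "1 \<le> k'" using k1 by (simp add: one_enat_def)
      have kp: "real k' > 0" using k1' by simp
      have "PM L (real k') (\<lambda>l. x l * c l) \<le> Mx L (\<lambda>l. x l * c l)" by (rule PM_le_Mx[OF L kp])
      also have "\<dots> \<le> Mx L c" using xc by (intro Mx_le[OF L]) auto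
      finally show ?thesis unfolding enat LHS_PM[OF k1'] r normLq_inf .
    next
      case infinity
      have "Mx L v = Mx L (\<lambda>l. x l * c l)" by (rule Mx_cong) (use vx in auto)
      also have "\<dots> \<le> Mx L c" using xc by (intro Mx_le[OF L]) auto
      finally show ?thesis unfolding infinity r normLq_inf .
    qed
  qed
qed

end
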